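(* Let $F\colon \mathbb{R}^n \to \mathbb{R}$ be a differentiable function (a deep neural network) that is strictly positive homogeneous of degree $k \in \mathbb{R}$ with $k \geq 1$, i.e. $F(\alpha x) = \alpha^k F(x)$ for all $x \in \mathbb{R}^n$ and all $\alpha \in \mathbb{R}_{>0}$. Then for every $x\in\mathbb{R}^n$ and every $i\in\{1,\dots,n\}$, the Integrated Gradients attribution $\mathrm{IG}_i(F, x, \mathbf{0})$ with respect to the zero baseline $\mathbf{0}\in\mathbb{R}^n$ admits a closed-form expression requiring only one forward/backward pass, i.e. an explicit expression in terms of $x$ and the single gradient $\nabla F(x)$.
   Context: For a differentiable $F\colon\mathbb{R}^n\to\mathbb{R}$, input $x\in\mathbb{R}^n$ and the zero baseline, Integrated Gradients along the $i$-th dimension (using the straight-line path $\gamma(\alpha)=\alpha x$) is defined as $\mathrm{IG}_i(F,x,\mathbf{0}) = \int_0^1 \frac{\partial F(\gamma(\alpha))}{\partial \gamma_i(\alpha)}\,\frac{\partial \gamma_i(\alpha)}{\partial \alpha}\,d\alpha = \int_0^1 \frac{\partial F}{\partial x_i}(\alpha x)\, x_i\, d\alpha$. "Requiring only one forward/backward pass" means the quantity can be computed from a single evaluation of $F$ and its gradient $\nabla F$ at the point $x$ (no numerical integration over multiple points). *)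

theory Defs
  imports "HOL-Analysis.Analysis"
begin

definition partial_deriv :: "(real^'n \<Rightarrow> real) \<Rightarrow> 'n \<Rightarrow> real^'n \<Rightarrow> real" where
  "partial_deriv F i x = frechet_derivative F (at x) (axis i 1)"

definition IG_zero :: "(real^'n \<Rightarrow> real) \<Rightarrow> real^'n \<Rightarrow> 'n \<Rightarrow> real" where
  "IG_zero F x i = integral {0..1} (\<lambda>a. partial_deriv F i (a *\<^sub>R x) * x $ i)"

end

theory Submission
  imports Defs
begin

lemma pd_scale:
  fixes F :: "real^'n \<Rightarrow> real" and k :: real
  assumes diff: "\<And>x. F differentiable (at x)"
    and hom: "\<And>x a. a > 0 \<Longrightarrow> F (a *\<^sub>R x) = a powr k * F x"
    and a: "a > 0"
  shows "partial_deriv F i (a *\<^sub>R x) = a powr (k - 1) * partial_deriv F i x"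
proof -
  define D where "D y = frechet_derivative F (at y)" for y
  have hd: "(F has_derivative D y) (at y)" for y
    unfolding D_def using diff[of y] frechet_derivative_works by blast
  have lin: "linear (D y)" for y using hd has_derivative_linear by blast
  have d1: "((\<lambda>y. F (a *\<^sub>R y)) has_derivative (\<lambda>h. D (a *\<^sub>R x) (a *\<^sub>R h))) (at x)"
  proof -
    have "((\<lambda>y. a *\<^sub>R y) has_derivative (\<lambda>h. a *\<^sub>R h)) (at x)"
      by (intro derivative_eq_intros) auto
    from has_derivative_compose[OF this hd[of "a *\<^sub>R x"]] show ?thesis
      by (simp add: o_def)
  qed
  have d2: "((\<lambda>y. a powr k * F y) has_derivative (\<lambda>h. a powr k * D x h)) (at x)"
    by (rule has_derivative_mult_right[OF hd])
  have eqf: "(\<lambda>y. F (a *\<^sub>R y)) = (\<lambda>y. a powr k * F y)" using hom a by auto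
  have "(\<lambda>h. D (a *\<^sub>R x) (a *\<^sub>R h)) = (\<lambda>h. a powr k * D x h)"
    using has_derivative_unique d1 d2 unfolding eqf by blast
  hence "D (a *\<^sub>R x) (a *\<^sub>R axis i 1) = a powr k * D x (axis i 1)" by metis
  moreover have "D (a *\<^sub>R x) (a *\<^sub>R axis i 1) = a * D (a *\<^sub>R x) (axis i 1)"
    using linear_scale[OF lin] by simp
  moreover have "a powr k = a * a powr (k - 1)"
    using a powr_add[of a 1 "k - 1"] by simp
  ultimately have "a * D (a *\<^sub>R x) (axis i 1) = a * (a powr (k - 1) * D x (axis i 1))" by simp
  thus ?thesis using a unfolding partial_deriv_def D_def by simp
qed

theorem proposition3p2:
  fixes F :: "real^'n \<Rightarrow> real" and k :: real
  assumes diff: "\<And>x. F differentiable (at x)"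
    and hom: "\<And>x a. a > 0 \<Longrightarrow> F (a *\<^sub>R x) = a powr k * F x"
    and k: "k \<ge> 1"
  shows "\<forall>x i. IG_zero F x i = x $ i * partial_deriv F i x / k"
proof (intro allI)
  fix x i
  let ?c = "partial_deriv F i x * x $ i"
  have "((\<lambda>a. a powr (k - 1)) has_integral (1 powr (k - 1 + 1) / (k - 1 + 1))) {0..1}"
    using k by (intro has_integral_powr_from_0) auto
  hence "((\<lambda>a. a powr (k - 1)) has_integral (1 / k)) {0..1}" by simp
  hence h1: "((\<lambda>a. a powr (k - 1) * ?c) has_integral (1 / k * ?c)) {0..1}"
    by (rule has_integral_mult_left)
  have h2: "((\<lambda>a. partial_deriv F i (a *\<^sub>R x) * x $ i) has_integral (1 / k * ?c)) {0..1}"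
  proof (rule has_integral_spike_finite[OF _ _ h1])
    show "finite {0::real}" by simp
    fix a assume "a \<in> {0..1} - {0::real}"
    hence "a > 0" by auto
    thus "partial_deriv F i (a *\<^sub>R x) * x $ i = a powr (k - 1) * ?c"
      using pd_scale[OF diff hom] by simp
  qed
  show "IG_zero F x i = x $ i * partial_deriv F i x / k"
    unfolding IG_zero_def integral_unique[OF h2] by simp
qed

end
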